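(* Let $X$ be a metric space, $\mathscr{F}\in\mathrm{IFS}_k(X)$, and let $B\subset X$ be an open set with $X=\overline{\mathcal{O}^+_{\mathscr{F}}(B)}=\mathcal{O}^-_{\mathscr{F}}(B)$. Suppose there are maps $\{h_i\}_{i\geq1}\subset\langle\mathscr{F}\rangle^+$ such that $B\subset\bigcup_{i=1}^\infty h_i(B)$ and $\lim_{n\to\infty}\mathrm{diam}(h_{i_1}\circ\dots\circ h_{i_n}(B))=0$ for every sequence $(i_n)_{n\geq1}$ of positive integers with $h_{i_1}\circ\dots\circ h_{i_n}(B)\cap B\neq\emptyset$ for all $n$. Then $\mathscr{F}$ is minimal.
   Context: $\mathrm{IFS}_k(X)$ is the set of families of $k$ locally Lipschitz homeomorphisms of $X$ (up to reordering). $\langle\mathscr{F}\rangle^+$ is the semigroup of finite compositions of elements of $\mathscr{F}$. $\mathcal{O}^+_{\mathscr{F}}(A)=\{h(x):h\in\langle\mathscr{F}\rangle^+,x\in A\}$, $\mathcal{O}^-_{\mathscr{F}}(A)=\{h^{-1}(x):h\in\langle\mathscr{F}\rangle^+,x\in A\}$. $\mathscr{F}$ is minimal if $\mathcal{O}^+_{\mathscr{F}}(\{x\})$ is dense for every $x\in X$. *)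

theory Defs
  imports "HOL-Analysis.Analysis"
begin

text \<open>The metric space X is the whole carrier of a type of class metric_space.\<close>

definition loc_lipschitz :: "('a::metric_space \<Rightarrow> 'b::metric_space) \<Rightarrow> bool" where
  "loc_lipschitz f \<longleftrightarrow> (\<forall>x. \<exists>e>0. \<exists>L. L-lipschitz_on (ball x e) f)"

definition loc_lip_homeo :: "('a::metric_space \<Rightarrow> 'a) \<Rightarrow> bool" where
  "loc_lip_homeo f \<longleftrightarrow> (\<exists>g. homeomorphism UNIV UNIV f g) \<and> loc_lipschitz f"

text \<open>IFS_k(X): families of k locally Lipschitz homeomorphisms, given as a list
  (the order is irrelevant for everything below).\<close>
definition IFS :: "nat \<Rightarrow> ('a::metric_space \<Rightarrow> 'a) list set" where
  "IFS k = {fs. length fs = k \<and> (\<forall>f\<in>set fs. loc_lip_homeo f)}"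

inductive_set semigrp :: "('a \<Rightarrow> 'a) list \<Rightarrow> ('a \<Rightarrow> 'a) set" for fs where
  gen: "f \<in> set fs \<Longrightarrow> f \<in> semigrp fs"
| comp: "f \<in> set fs \<Longrightarrow> h \<in> semigrp fs \<Longrightarrow> f \<circ> h \<in> semigrp fs"

definition orbit_plus :: "('a \<Rightarrow> 'a) list \<Rightarrow> 'a set \<Rightarrow> 'a set" where
  "orbit_plus fs A = {h x | h x. h \<in> semigrp fs \<and> x \<in> A}"

definition orbit_minus :: "('a \<Rightarrow> 'a) list \<Rightarrow> 'a set \<Rightarrow> 'a set" where
  "orbit_minus fs A = {inv h x | h x. h \<in> semigrp fs \<and> x \<in> A}"

definition minimal_IFS :: "('a::topological_space \<Rightarrow> 'a) list \<Rightarrow> bool" where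
  "minimal_IFS fs \<longleftrightarrow> (\<forall>x. closure (orbit_plus fs {x}) = UNIV)"

text \<open>compseq hs s n = hs (s 0) \<circ> hs (s 1) \<circ> ... \<circ> hs (s (n-1)).\<close>
primrec compseq :: "(nat \<Rightarrow> 'a \<Rightarrow> 'a) \<Rightarrow> (nat \<Rightarrow> nat) \<Rightarrow> nat \<Rightarrow> 'a \<Rightarrow> 'a" where
  "compseq hs s 0 = id"
| "compseq hs s (Suc n) = compseq hs s n \<circ> hs (s n)"

end

theory Submission
  imports Defs
begin

lemma semigrp_props:
  assumes "fs \<in> IFS k" "h \<in> semigrp fs"
  shows "continuous_on UNIV h \<and> surj h"
  using assms(2)
proof induction
  case (gen f)
  then obtain g where "homeomorphism UNIV UNIV f g"
    using assms(1) unfolding IFS_def loc_lip_homeo_def by blast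
  then show ?case unfolding homeomorphism_def by auto
next
  case (comp f h)
  then obtain g where "homeomorphism UNIV UNIV f g"
    using assms(1) unfolding IFS_def loc_lip_homeo_def by blast
  then have "continuous_on UNIV f" "surj f" unfolding homeomorphism_def by auto
  moreover have "continuous_on UNIV (f \<circ> h)"
    by (rule continuous_on_compose) (use comp \<open>continuous_on UNIV f\<close> in simp_all)
  moreover have "surj (f \<circ> h)" using comp \<open>surj f\<close> by (metis image_comp)
  ultimately show ?case by blast
qed

lemma semigrp_comp:
  assumes "g \<in> semigrp fs" "h \<in> semigrp fs"
  shows "g \<circ> h \<in> semigrp fs"
  using assms(1)
proof induction
  case (gen f) then show ?case using assms(2) by (rule semigrp.comp)
next
  case (comp f g) then show ?case by (metis comp_assoc semigrp.comp)
qed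

lemma compseq_semigrp:
  assumes "\<forall>i. hs i \<in> semigrp fs" "n \<ge> 1"
  shows "compseq hs s n \<in> semigrp fs"
  using assms(2)
proof (induction n)
  case 0 then show ?case by simp
next
  case (Suc n)
  show ?case
  proof (cases "n = 0")
    case True then show ?thesis using assms(1) by simp
  next
    case False
    then have "compseq hs s n \<in> semigrp fs" using Suc by simp
    moreover have "hs (s n) \<in> semigrp fs" using assms(1) by blast
    ultimately show ?thesis unfolding compseq.simps by (rule semigrp_comp)
  qed
qed

theorem mainTheorem13:
  fixes fs :: "('a::metric_space \<Rightarrow> 'a) list" and k :: nat
    and B :: "'a set" and hs :: "nat \<Rightarrow> 'a \<Rightarrow> 'a"
  assumes "fs \<in> IFS k"
    and "open B"
    and "closure (orbit_plus fs B) = UNIV"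
    and "orbit_minus fs B = UNIV"
    and "\<forall>i. hs i \<in> semigrp fs"
    and "B \<subseteq> (\<Union>i. hs i ` B)"
    and "\<forall>s. (\<forall>n\<ge>1. compseq hs s n ` B \<inter> B \<noteq> {}) \<longrightarrow>
            ((\<forall>\<^sub>F n in sequentially. bounded (compseq hs s n ` B)) \<and>
             (\<lambda>n. diameter (compseq hs s n ` B)) \<longlonglongrightarrow> 0)"
  shows "minimal_IFS fs"
  unfolding minimal_IFS_def
proof
  fix x :: 'a
  let ?C = "closure (orbit_plus fs {x})"
  obtain h b where hb: "h \<in> semigrp fs" "b \<in> B" "x = inv h b"
    using assms(4) unfolding orbit_minus_def by blast
  have "surj h" using semigrp_props[OF assms(1) hb(1)] by blast
  then have hx: "h x = b" using hb(3) by (simp add: surj_f_inv_f)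
  have chooser: "\<exists>p. snd p \<in> B \<and> hs (fst p) (snd p) = w" if "w \<in> B" for w
  proof -
    obtain i v where "v \<in> B" "w = hs i v" using assms(6) \<open>w \<in> B\<close> by blast
    then show ?thesis by (intro exI[of _ "(i,v)"]) simp
  qed
  define G where "G = (\<lambda>w. SOME p. snd p \<in> B \<and> hs (fst p) (snd p) = w)"
  have G: "\<And>w. w \<in> B \<Longrightarrow> snd (G w) \<in> B \<and> hs (fst (G w)) (snd (G w)) = w"
    unfolding G_def by (rule someI_ex) (rule chooser)
  have BC: "B \<subseteq> ?C"
  proof
    fix z assume zB: "z \<in> B"
    define p where "p = rec_nat z (\<lambda>_ w. snd (G w))"
    define s where "s = (\<lambda>n. fst (G (p n)))"
    have p0: "p 0 = z" and pS: "\<And>n. p (Suc n) = snd (G (p n))" unfolding p_def by auto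
    have pB: "p n \<in> B" for n by (induction n) (use zB p0 pS G in auto)
    have pstep: "hs (s n) (p (Suc n)) = p n" for n using G[OF pB[of n]] pS s_def by simp
    have cz: "compseq hs s n (p n) = z" for n
    proof (induction n)
      case 0 then show ?case using p0 by simp
    next
      case (Suc n) then show ?case using pstep by simp
    qed
    have "\<forall>n\<ge>1. compseq hs s n ` B \<inter> B \<noteq> {}"
    proof (intro allI impI)
      fix n :: nat
      have "z \<in> compseq hs s n ` B" using cz[of n] pB[of n] by (metis image_eqI)
      then show "compseq hs s n ` B \<inter> B \<noteq> {}" using zB by blast
    qed
    with assms(7) have ev: "\<forall>\<^sub>F n in sequentially. bounded (compseq hs s n ` B)"
      and lim: "(\<lambda>n. diameter (compseq hs s n ` B)) \<longlonglongrightarrow> 0" by blast+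
    show "z \<in> ?C"
      unfolding closure_approachable
    proof (intro allI impI)
      fix e :: real assume e: "e > 0"
      have "\<forall>\<^sub>F n in sequentially. diameter (compseq hs s n ` B) < e"
        using lim e by (metis order_tendstoD(2))
      with ev have "\<forall>\<^sub>F n in sequentially. n \<ge> 1 \<and> bounded (compseq hs s n ` B) \<and> diameter (compseq hs s n ` B) < e"
        by (simp add: eventually_conj_iff eventually_ge_at_top)
      then obtain n where n: "n \<ge> 1" "bounded (compseq hs s n ` B)" "diameter (compseq hs s n ` B) < e"
        using eventually_sequentially by auto
      have "dist (compseq hs s n b) (compseq hs s n (p n)) \<le> diameter (compseq hs s n ` B)"
        using n(2) hb(2) pB by (intro diameter_bounded_bound) auto
      then have d: "dist (compseq hs s n b) z < e" using n(3) cz by simp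
      have "compseq hs s n \<circ> h \<in> semigrp fs"
        using semigrp_comp[OF compseq_semigrp[OF assms(5) n(1)] hb(1)] .
      then have "compseq hs s n b \<in> orbit_plus fs {x}"
        unfolding orbit_plus_def using hx
        by (intro CollectI exI[of _ "compseq hs s n \<circ> h"] exI[of _ x]) simp
      with d show "\<exists>y\<in>orbit_plus fs {x}. dist y z < e" by blast
    qed
  qed
  have "orbit_plus fs B \<subseteq> ?C"
  proof
    fix y assume "y \<in> orbit_plus fs B"
    then obtain g b' where gb: "g \<in> semigrp fs" "b' \<in> B" "y = g b'"
      unfolding orbit_plus_def by blast
    have cg: "continuous_on UNIV g" using semigrp_props[OF assms(1) gb(1)] by blast
    have sub: "g ` orbit_plus fs {x} \<subseteq> orbit_plus fs {x}"
    proof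
      fix w assume "w \<in> g ` orbit_plus fs {x}"
      then obtain h' where "h' \<in> semigrp fs" "w = g (h' x)" unfolding orbit_plus_def by blast
      moreover have "g \<circ> h' \<in> semigrp fs" using semigrp_comp[OF gb(1) \<open>h' \<in> semigrp fs\<close>] .
      ultimately show "w \<in> orbit_plus fs {x}" unfolding orbit_plus_def
        by (intro CollectI exI[of _ "g \<circ> h'"] exI[of _ x]) simp
    qed
    have "g ` ?C \<subseteq> ?C"
      by (rule image_closure_subset) (use cg sub closure_subset in \<open>auto intro: continuous_on_subset\<close>)
    then show "y \<in> ?C" using BC gb by blast
  qed
  then have "closure (orbit_plus fs B) \<subseteq> ?C" by (simp add: closure_minimal)
  then show "?C = UNIV" using assms(3) by blast
qed

end
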